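(* Assume the setting described in the context. If $E$ is a closed unbounded subset of $\lambda$, then there are stationarily many $\delta\in S$ for which $E\cap C_\delta\notin I_\delta$.
   Context: Setting: $\mu$ is a singular cardinal with $\mathrm{cf}(\mu)=\aleph_0$, $\lambda=\mu^+$, $\sigma$ is regular with $\aleph_0<\sigma<\mu$, $S$ is a stationary subset of $\{\delta<\lambda:\mathrm{cf}(\delta)=\sigma\}$, and $\langle\mu_i:i<\omega\rangle$ is a strictly increasing sequence of regular cardinals cofinal in $\mu$ with $\sigma<\mu_0$. For $\delta\in S$, $c^0_\delta$ is the increasing enumeration of a club subset of $\delta$ of order type $\sigma$, and for every club $E\subseteq\lambda$ the set of $\delta\in S$ with $\mathrm{ran}(c^0_\delta)\subseteq E$ is stationary. $I(\delta,\epsilon,m)=(c^0_\delta(\omega\cdot\epsilon+m),c^0_\delta(\omega\cdot\epsilon+m+1)]$ for $\epsilon<\sigma$, $m<\omega$. $\langle C_\delta:\delta\in S\rangle$ satisfies: $C_\delta$ club in $\delta$; $\mathrm{ran}(c^0_\delta)\subseteq C_\delta$; $|C_\delta\cap I(\delta,\epsilon,m)|\leq\mu_m^+$; every $\alpha\in\mathrm{nacc}(C_\delta)\cap I(\delta,\epsilon,m)$ has $\mathrm{cf}(\alpha)>\mu_m^+$; for every club $E\subseteq\lambda$ there are stationarily many $\delta\in S$ with $E\cap\mathrm{nacc}(C_\delta)\cap I(\delta,\epsilon,m)\neq\emptyset$ for all $\epsilon<\sigma$, $m<\omega$. ($\mathrm{acc}(C)=\{\alpha<\delta:\alpha=\sup(\alpha\cap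 C)\}$, $\mathrm{nacc}(C)=C\setminus\mathrm{acc}(C)$.) For $\delta\in S$, $I_\delta$ is the ideal on $C_\delta$ generated by the sets $\{\gamma\in C_\delta:\gamma\in\mathrm{acc}(C_\delta)\text{ or }\mathrm{cf}(\gamma)<\alpha\text{ or }\gamma<\beta\}$ for $\alpha<\mu$, $\beta<\delta$. *)

theory Defs
  imports Main
begin

text \<open>Ordinals below \<lambda> are modelled as the elements of a well-ordered type 'a,
  ordered by its order; cardinalities are compared via card_of / ordLeq / ordLess.\<close>

definition card_le :: "'b set \<Rightarrow> 'c set \<Rightarrow> bool" where
  "card_le A B \<longleftrightarrow> (card_of A, card_of B) \<in> ordLeq"

definition card_lt :: "'b set \<Rightarrow> 'c set \<Rightarrow> bool" where
  "card_lt A B \<longleftrightarrow> (card_of A, card_of B) \<in> ordLess"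

definition is_card :: "'a::wellorder \<Rightarrow> bool" where
  "is_card \<kappa> \<longleftrightarrow> (\<forall>\<alpha><\<kappa>. card_lt {..<\<alpha>} {..<\<kappa>})"

definition cof :: "'a::wellorder \<Rightarrow> 'a" where
  "cof \<alpha> = (LEAST \<beta>. \<exists>X \<subseteq> {..<\<alpha>}. (\<forall>\<gamma><\<alpha>. \<exists>x\<in>X. \<gamma> \<le> x) \<and> card_le X {..<\<beta>})"

definition omega :: "'a::wellorder" where
  "omega = (LEAST \<alpha>. infinite {..<\<alpha>})"

definition csucc :: "'a::wellorder \<Rightarrow> 'a" where
  "csucc \<kappa> = (LEAST \<beta>. card_lt {..<\<kappa>} {..<\<beta>})"

definition osucc :: "'a::wellorder \<Rightarrow> 'a" where
  "osucc \<alpha> = (LEAST \<beta>. \<alpha> < \<beta>)"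

definition lim_or_zero :: "'a::wellorder \<Rightarrow> bool" where
  "lim_or_zero \<alpha> \<longleftrightarrow> (\<forall>\<gamma><\<alpha>. \<exists>\<beta>. \<gamma> < \<beta> \<and> \<beta> < \<alpha>)"

definition ord_iso_sets :: "'a::wellorder set \<Rightarrow> 'a set \<Rightarrow> bool" where
  "ord_iso_sets A B \<longleftrightarrow> (\<exists>f. bij_betw f A B \<and> strict_mono_on A f)"

text \<open>omega * eps = the eps-th ordinal that is zero or a limit.\<close>
definition om_times :: "'a::wellorder \<Rightarrow> 'a" where
  "om_times \<epsilon> = (THE \<alpha>. lim_or_zero \<alpha> \<and> ord_iso_sets {..<\<epsilon>} {\<beta>. \<beta> < \<alpha> \<and> lim_or_zero \<beta>})"

definition om_plus :: "'a::wellorder \<Rightarrow> nat \<Rightarrow> 'a" where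
  "om_plus \<epsilon> m = (osucc ^^ m) (om_times \<epsilon>)"

definition club :: "'a::wellorder set \<Rightarrow> bool" where
  "club E \<longleftrightarrow>
     (\<forall>\<alpha>. (\<exists>e\<in>E. e < \<alpha>) \<and> (\<forall>\<gamma><\<alpha>. \<exists>e\<in>E. \<gamma> < e \<and> e < \<alpha>) \<longrightarrow> \<alpha> \<in> E)
   \<and> (\<forall>\<gamma>. \<exists>e\<in>E. \<gamma> \<le> e)"

definition stationary :: "'a::wellorder set \<Rightarrow> bool" where
  "stationary S \<longleftrightarrow> (\<forall>E. club E \<longrightarrow> S \<inter> E \<noteq> {})"

definition club_in :: "'a::wellorder \<Rightarrow> 'a set \<Rightarrow> bool" where
  "club_in \<delta> C \<longleftrightarrow> C \<subseteq> {..<\<delta>}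
   \<and> (\<forall>\<alpha><\<delta>. (\<exists>c\<in>C. c < \<alpha>) \<and> (\<forall>\<gamma><\<alpha>. \<exists>c\<in>C. \<gamma> < c \<and> c < \<alpha>) \<longrightarrow> \<alpha> \<in> C)
   \<and> (\<forall>\<gamma><\<delta>. \<exists>c\<in>C. \<gamma> \<le> c)"

text \<open>acc(C) = {\<alpha> < \<delta>. \<alpha> = sup(\<alpha> \<inter> C)}, nacc(C) = C - acc(C).\<close>
definition acc :: "'a::wellorder \<Rightarrow> 'a set \<Rightarrow> 'a set" where
  "acc \<delta> C = {\<alpha>. \<alpha> < \<delta> \<and> (\<forall>\<gamma><\<alpha>. \<exists>c\<in>C. \<gamma> < c \<and> c < \<alpha>)}"

definition nacc :: "'a::wellorder \<Rightarrow> 'a set \<Rightarrow> 'a set" where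
  "nacc \<delta> C = C - acc \<delta> C"

definition Ival :: "('a::wellorder \<Rightarrow> 'a \<Rightarrow> 'a) \<Rightarrow> 'a \<Rightarrow> 'a \<Rightarrow> nat \<Rightarrow> 'a set" where
  "Ival c0 \<delta> \<epsilon> m = {\<alpha>. c0 \<delta> (om_plus \<epsilon> m) < \<alpha> \<and> \<alpha> \<le> c0 \<delta> (osucc (om_plus \<epsilon> m))}"

definition gen_set :: "'a::wellorder \<Rightarrow> 'a set \<Rightarrow> 'a \<Rightarrow> 'a \<Rightarrow> 'a set" where
  "gen_set \<delta> C \<alpha> \<beta> = {\<gamma>\<in>C. \<gamma> \<in> acc \<delta> C \<or> cof \<gamma> < \<alpha> \<or> \<gamma> < \<beta>}"

definition ideal_I :: "'a::wellorder \<Rightarrow> 'a \<Rightarrow> 'a set \<Rightarrow> 'a set set" where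
  "ideal_I \<mu> \<delta> C = {X. X \<subseteq> C \<and> (\<exists>F. finite F \<and> F \<subseteq> {(\<alpha>, \<beta>). \<alpha> < \<mu> \<and> \<beta> < \<delta>}
        \<and> X \<subseteq> (\<Union>(\<alpha>, \<beta>)\<in>F. gen_set \<delta> C \<alpha> \<beta>))}"

end

theory Submission
  imports Defs
begin


definition nle :: "('a::wellorder \<times> 'a) set" where "nle = {(x,y). x \<le> y}"

lemma Field_nle: "Field (nle::('a::wellorder \<times> 'a) set) = UNIV"
  unfolding nle_def Field_def by auto

lemma WO_nle: "Well_order (nle::('a::wellorder \<times> 'a) set)"
proof -
  have "nle - Id = {(x,y::'a). x < y}" unfolding nle_def by auto
  hence w: "wf (nle - Id :: ('a \<times> 'a) set)" using wellorder_class.wf by simp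
  show ?thesis unfolding well_order_on_def linear_order_on_def partial_order_on_def
      preorder_on_def Field_nle
    using w by (auto simp: nle_def refl_on_def trans_def antisym_def total_on_def)
qed

lemma mono_ge:
  fixes h :: "'a::wellorder \<Rightarrow> 'a"
  assumes "strict_mono_on D h" "h ` D \<subseteq> D"
  shows "x \<in> D \<Longrightarrow> x \<le> h x"
proof (induction x rule: less_induct)
  case (less x)
  show ?case
  proof (rule ccontr)
    assume "\<not> x \<le> h x"
    hence lt: "h x < x" by simp
    have hD: "h x \<in> D" using assms(2) less.prems by blast
    have "h (h x) < h x" using assms(1) hD less.prems lt by (simp add: strict_mono_on_def)
    moreover have "h x \<le> h (h x)" using less.IH[OF lt hD] .
    ultimately show False by simp
  qed
qed

lemma strict_mono_inv:
  fixes f :: "'a::wellorder \<Rightarrow> 'a"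
  assumes "bij_betw f A B" "strict_mono_on A f"
  shows "strict_mono_on B (inv_into A f)" "bij_betw (inv_into A f) B A"
proof -
  show b: "bij_betw (inv_into A f) B A" using assms(1) by (rule bij_betw_inv_into)
  show "strict_mono_on B (inv_into A f)"
  proof (rule strict_mono_onI)
    fix x y assume xy: "x \<in> B" "y \<in> B" "x < y"
    have i: "inv_into A f x \<in> A" "inv_into A f y \<in> A" using b xy bij_betw_apply by fastforce+
    have fi: "f (inv_into A f x) = x" "f (inv_into A f y) = y"
      using assms(1) xy by (simp_all add: bij_betw_inv_into_right)
    show "inv_into A f x < inv_into A f y"
    proof (rule ccontr)
      assume "\<not> ?thesis"
      hence "inv_into A f y \<le> inv_into A f x" by simp
      hence "f (inv_into A f y) \<le> f (inv_into A f x)"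
        using assms(2) i by (metis order.order_iff_strict strict_mono_onD)
      thus False using fi xy by simp
    qed
  qed
qed

lemma iso_exists:
  fixes A :: "'a::wellorder set"
  assumes "A \<subseteq> {..<b}"
  shows "\<exists>\<epsilon>. ord_iso_sets {..<\<epsilon>} A"
proof -
  let ?r = "nle :: ('a \<times> 'a) set"
  let ?rA = "Restr ?r A"
  have W: "Well_order ?r" by (rule WO_nle)
  have WA: "Well_order ?rA" using W by (rule Well_order_Restr)
  have FA: "Field ?rA = A" unfolding Field_def nle_def by auto
  have cmp: "\<And>f r1 r2. embed r1 r2 f \<Longrightarrow> (a,c) \<in> r1 \<Longrightarrow> (f a, f c) \<in> r2" for a c
    using embed_compat unfolding compat_def by blast
  from ordLeq_total[OF WA W] show ?thesis
  proof
    assume "(?rA, ?r) \<in> ordLeq"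
    then obtain f where e: "embed ?rA ?r f" unfolding ordLeq_def by blast
    have inj: "inj_on f A" using embed_inj_on[OF WA e] FA by simp
    have of: "wo_rel.ofilter ?r (f ` A)" using embed_Field_ofilter[OF WA W e] FA by simp
    have sm: "strict_mono_on A f"
    proof (rule strict_mono_onI)
      fix x y assume "x \<in> A" "y \<in> A" "x < y"
      hence "(x,y) \<in> ?rA" "x \<noteq> y" by (auto simp: nle_def)
      hence "f x \<le> f y" "f x \<noteq> f y" using cmp[OF e] inj \<open>x\<in>A\<close> \<open>y\<in>A\<close>
        by (auto simp: nle_def inj_on_def)
      thus "f x < f y" by simp
    qed
    have bij: "bij_betw f A (f ` A)" using inj by (simp add: bij_betw_def)
    have WR: "wo_rel ?r" using W by (simp add: wo_rel_def)
    from of have "(\<exists>a\<in>Field ?r. f ` A = wo_rel.underS ?r a) \<or> f ` A = Field ?r"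
      using wo_rel.ofilter_underS_Field[OF WR] by blast
    thus ?thesis
    proof
      assume "\<exists>a\<in>Field ?r. f ` A = wo_rel.underS ?r a"
      then obtain a where "f ` A = wo_rel.underS ?r a" by blast
      hence fa: "f ` A = {..<a}" unfolding underS_def nle_def by auto
      have "ord_iso_sets {..<a} A"
        unfolding ord_iso_sets_def using strict_mono_inv[OF bij sm] fa by auto
      thus ?thesis by blast
    next
      assume "f ` A = Field ?r"
      hence fa: "f ` A = UNIV" using Field_nle by simp
      let ?g = "inv_into A f"
      have g: "strict_mono_on UNIV ?g" "bij_betw ?g UNIV A"
        using strict_mono_inv[OF bij sm] fa by auto
      have "b \<le> ?g b" using mono_ge[OF g(1)] by simp
      moreover have "?g b \<in> A" using g(2) bij_betw_apply by fastforce
      ultimately show ?thesis using assms by auto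
    qed
  next
    assume "(?r, ?rA) \<in> ordLeq"
    then obtain f where e: "embed ?r ?rA f" unfolding ordLeq_def by blast
    have inj: "inj_on f UNIV" using embed_inj_on[OF W e] Field_nle by metis
    have fA: "f x \<in> A" for x
    proof -
      have "(x,x) \<in> ?r" by (simp add: nle_def)
      thus ?thesis using cmp[OF e] by blast
    qed
    have sm: "strict_mono_on UNIV f"
    proof (rule strict_mono_onI)
      fix x y :: 'a assume "x < y"
      hence "(x,y) \<in> ?r" "x \<noteq> y" by (auto simp: nle_def)
      hence "f x \<le> f y" "f x \<noteq> f y" using cmp[OF e] inj
        by (auto simp: nle_def inj_on_def)
      thus "f x < f y" by simp
    qed
    have "b \<le> f b" using mono_ge[OF sm] by simp
    thus ?thesis using fA[of b] assms by auto
  qed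
qed

lemma uniq_aux:
  fixes \<alpha> \<alpha>' \<epsilon> :: "'a::wellorder" and f g :: "'a \<Rightarrow> 'a"
  assumes f: "bij_betw f {..<\<epsilon>} {\<beta>. \<beta> < \<alpha> \<and> lim_or_zero \<beta>}" "strict_mono_on {..<\<epsilon>} f"
    and g: "bij_betw g {..<\<epsilon>} {\<beta>. \<beta> < \<alpha>' \<and> lim_or_zero \<beta>}" "strict_mono_on {..<\<epsilon>} g"
    and l: "lim_or_zero \<alpha>"
  shows "\<not> \<alpha> < \<alpha>'"
proof
  assume lt: "\<alpha> < \<alpha>'"
  let ?L = "{\<beta>. \<beta> < \<alpha> \<and> lim_or_zero \<beta>}"
  let ?L' = "{\<beta>. \<beta> < \<alpha>' \<and> lim_or_zero \<beta>}"
  let ?h = "f \<circ> inv_into {..<\<epsilon>} g"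
  have gi: "strict_mono_on ?L' (inv_into {..<\<epsilon>} g)" "bij_betw (inv_into {..<\<epsilon>} g) ?L' {..<\<epsilon>}"
    using strict_mono_inv[OF g] by auto
  have hb: "bij_betw ?h ?L' ?L" using bij_betw_trans[OF gi(2) f(1)] .
  have hm: "strict_mono_on ?L' ?h"
  proof (rule strict_mono_onI)
    fix x y assume xy: "x \<in> ?L'" "y \<in> ?L'" "x < y"
    have "inv_into {..<\<epsilon>} g x < inv_into {..<\<epsilon>} g y" using gi(1) xy strict_mono_onD by blast
    moreover have "inv_into {..<\<epsilon>} g x \<in> {..<\<epsilon>}" "inv_into {..<\<epsilon>} g y \<in> {..<\<epsilon>}"
      using bij_betw_apply[OF gi(2)] xy by blast+
    ultimately show "?h x < ?h y" using f(2) strict_mono_onD by fastforce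
  qed
  have "?h ` ?L' = ?L" using hb by (rule bij_betw_imp_surj_on)
  moreover have "?L \<subseteq> ?L'" using lt by auto
  ultimately have sub: "?h ` ?L' \<subseteq> ?L'" by simp
  have aL: "\<alpha> \<in> ?L'" using lt l by simp
  have "\<alpha> \<le> ?h \<alpha>" using mono_ge[OF hm sub aL] .
  moreover have "?h \<alpha> \<in> ?L" using hb aL bij_betw_apply by fast
  ultimately show False by (metis leD mem_Collect_eq)
qed

lemma om_times_lim:
  fixes \<alpha> :: "'a::wellorder"
  assumes l: "lim_or_zero \<alpha>"
  shows "\<exists>\<epsilon>\<le>\<alpha>. om_times \<epsilon> = \<alpha>"
proof -
  let ?L = "{\<beta>. \<beta> < \<alpha> \<and> lim_or_zero \<beta>}"
  have "?L \<subseteq> {..<\<alpha>}" by auto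
  then obtain \<epsilon> where i: "ord_iso_sets {..<\<epsilon>} ?L" using iso_exists by blast
  then obtain f where f: "bij_betw f {..<\<epsilon>} ?L" "strict_mono_on {..<\<epsilon>} f"
    unfolding ord_iso_sets_def by blast
  have le: "\<epsilon> \<le> \<alpha>"
  proof (rule ccontr)
    assume "\<not> \<epsilon> \<le> \<alpha>"
    hence a: "\<alpha> < \<epsilon>" by simp
    have "f ` {..<\<epsilon>} = ?L" using f(1) by (rule bij_betw_imp_surj_on)
    moreover have "?L \<subseteq> {..<\<epsilon>}" using a by auto
    ultimately have sub: "f ` {..<\<epsilon>} \<subseteq> {..<\<epsilon>}" by simp
    have "\<alpha> \<le> f \<alpha>" using mono_ge[OF f(2) sub] a by simp
    moreover have "f \<alpha> \<in> ?L" using bij_betw_apply[OF f(1)] a by blast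
    ultimately show False by (metis leD mem_Collect_eq)
  qed
  have "om_times \<epsilon> = \<alpha>"
    unfolding om_times_def
  proof (rule the_equality)
    show "lim_or_zero \<alpha> \<and> ord_iso_sets {..<\<epsilon>} ?L" using l i by simp
  next
    fix \<alpha>' assume h: "lim_or_zero \<alpha>' \<and> ord_iso_sets {..<\<epsilon>} {\<beta>. \<beta> < \<alpha>' \<and> lim_or_zero \<beta>}"
    then obtain g where g: "bij_betw g {..<\<epsilon>} {\<beta>. \<beta> < \<alpha>' \<and> lim_or_zero \<beta>}" "strict_mono_on {..<\<epsilon>} g"
      unfolding ord_iso_sets_def by blast
    have "\<not> \<alpha> < \<alpha>'" using uniq_aux[OF f g l] .
    moreover have "\<not> \<alpha>' < \<alpha>" using uniq_aux[OF g f] h by blast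
    ultimately show "\<alpha>' = \<alpha>" by simp
  qed
  thus ?thesis using le by blast
qed


lemma osucc_basic:
  fixes x s :: "'a::wellorder"
  assumes "x < s" shows "x < osucc x" "osucc x \<le> s"
proof -
  show "x < osucc x" unfolding osucc_def by (rule LeastI[of _ s]) (rule assms)
  show "osucc x \<le> s" unfolding osucc_def by (rule Least_le) (rule assms)
qed

lemma osucc_below:
  fixes x s :: "'a::wellorder"
  assumes c: "is_card s" and inf: "infinite {..<s}" and xs: "x < s"
  shows "osucc x < s"
proof (rule ccontr)
  assume "\<not> osucc x < s"
  hence eq: "osucc x = s" using osucc_basic[OF xs] by simp
  have set: "{..<s} = {..<x} \<union> {x}"
  proof (rule set_eqI, rule iffI)
    fix y assume "y \<in> {..<s}"
    hence "y < osucc x" using eq by simp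
    hence "\<not> x < y" unfolding osucc_def using not_less_Least by blast
    thus "y \<in> {..<x} \<union> {x}" by auto
  next
    fix y assume "y \<in> {..<x} \<union> {x}" thus "y \<in> {..<s}" using xs by auto
  qed
  have ix: "infinite {..<x}"
  proof
    assume "finite {..<x}"
    hence "finite ({..<x} \<union> {x})" by simp
    thus False using inf set by simp
  qed
  then obtain h where "bij_betw h {..<x} ({..<x} \<union> {x})" using infinite_imp_bij_betw2[OF ix, of x] by blast
  hence "(card_of {..<x}, card_of {..<s}) \<in> ordIso" unfolding set[symmetric] using card_of_ordIso by blast
  moreover have "(card_of {..<x}, card_of {..<s}) \<in> ordLess" using c xs unfolding is_card_def card_lt_def by blast
  ultimately show False using not_ordLess_ordIso by blast
qed

lemma iter_below:
  fixes x s :: "'a::wellorder"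
  assumes c: "is_card s" and inf: "infinite {..<s}" and xs: "x < s"
  shows "(osucc ^^ m) x < s \<and> x \<le> (osucc ^^ m) x"
proof (induction m)
  case 0 then show ?case using xs by simp
next
  case (Suc m)
  then show ?case using osucc_below[OF c inf] osucc_basic[of "(osucc ^^ m) x" s] by auto
qed

lemma lim_above:
  fixes \<xi> s om :: "'a::wellorder"
  assumes c: "is_card s" and cf: "cof s = s" and io: "infinite {..<om}" and os: "om < s"
    and xs: "\<xi> < s"
  shows "\<exists>\<alpha>. lim_or_zero \<alpha> \<and> \<xi> \<le> \<alpha> \<and> \<alpha> < s"
proof -
  have inf: "infinite {..<s}" proof
    assume "finite {..<s}"
    moreover have "{..<om} \<subseteq> {..<s}" using os by auto
    ultimately show False using io finite_subset by blast
  qed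
  define q where "q n = (osucc ^^ n) \<xi>" for n
  have qs: "q n < s" for n using iter_below[OF c inf xs] q_def by simp
  have qsuc: "q n < q (Suc n)" for n using osucc_basic(1)[OF qs[of n]] q_def by simp
  have "\<exists>\<gamma><s. \<forall>n. q n < \<gamma>"
  proof (rule ccontr)
    assume "\<not> ?thesis"
    hence cofl: "\<forall>\<gamma><s. \<exists>x\<in>range q. \<gamma> \<le> x"
    proof (intro allI impI)
      fix \<gamma> assume "\<not> (\<exists>\<gamma><s. \<forall>n. q n < \<gamma>)" "\<gamma> < s"
      then obtain n where "\<not> q n < \<gamma>" by blast
      hence "\<gamma> \<le> q n" by (simp add: not_less)
      thus "\<exists>x\<in>range q. \<gamma> \<le> x" by blast
    qed
    have "(card_of (range q), card_of (UNIV :: nat set)) \<in> ordLeq" by (rule card_of_image)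
    moreover have "(card_of (UNIV :: nat set), card_of {..<om}) \<in> ordLeq"
      using io infinite_iff_card_of_nat by blast
    ultimately have "card_le (range q) {..<om}" unfolding card_le_def using ordLeq_transitive by blast
    moreover have "range q \<subseteq> {..<s}" using qs by auto
    ultimately have "cof s \<le> om" unfolding cof_def using cofl by (intro Least_le) blast
    thus False using cf os by simp
  qed
  then obtain \<gamma> where g: "\<gamma> < s" "\<forall>n. q n < \<gamma>" by blast
  define \<alpha> where "\<alpha> = (LEAST \<alpha>. \<forall>n. q n < \<alpha>)"
  have aq: "\<forall>n. q n < \<alpha>" unfolding \<alpha>_def using g(2) by (rule LeastI)
  have ag: "\<alpha> \<le> \<gamma>" unfolding \<alpha>_def using g(2) by (rule Least_le)
  have lim: "lim_or_zero \<alpha>" unfolding lim_or_zero_def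
  proof (intro allI impI)
    fix y assume "y < \<alpha>"
    hence "\<not> (\<forall>n. q n < y)" unfolding \<alpha>_def using not_less_Least by blast
    then obtain n where "y \<le> q n" by (auto simp: not_less)
    hence "y < q (Suc n)" using qsuc[of n] by (rule le_less_trans)
    thus "\<exists>\<beta>. y < \<beta> \<and> \<beta> < \<alpha>" using aq by blast
  qed
  have "\<xi> \<le> \<alpha>" using aq[rule_format, of 0] q_def by simp
  moreover have "\<alpha> < s" using ag g(1) by (rule le_less_trans)
  ultimately show ?thesis using lim by blast
qed

lemma csucc_ge:
  fixes k \<mu> :: "'a::wellorder"
  assumes "card_lt {..<k} {..<\<mu>}"
  shows "k \<le> csucc k"
proof (rule ccontr)
  assume "\<not> ?thesis"
  hence lt: "csucc k < k" by simp
  have "card_lt {..<k} {..<csucc k}" unfolding csucc_def using assms by (rule LeastI)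
  moreover have "(card_of {..<csucc k}, card_of {..<k}) \<in> ordLeq"
    using lt by (intro card_of_mono1) auto
  ultimately show False unfolding card_lt_def using not_ordLess_ordLeq by blast
qed


theorem proposition5p3:
  fixes \<mu> \<sigma> :: "'a::wellorder"
    and S :: "'a set"
    and mus :: "nat \<Rightarrow> 'a"
    and c0 :: "'a \<Rightarrow> 'a \<Rightarrow> 'a"
    and C :: "'a \<Rightarrow> 'a set"
    and E :: "'a set"
  assumes lambda_initial: "\<forall>\<alpha>::'a. card_lt {..<\<alpha>} (UNIV :: 'a set)"
    and lambda_succ: "(card_of (UNIV :: 'a set), cardSuc (card_of {..<\<mu>})) \<in> ordIso"
    and mu_card: "is_card \<mu>"
    and mu_cof: "cof \<mu> = omega"
    and sigma_regular: "is_card \<sigma> \<and> cof \<sigma> = \<sigma>"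
    and sigma_unc: "omega < \<sigma>"
    and sigma_mu: "\<sigma> < \<mu>"
    and S_cof: "S \<subseteq> {\<delta>. cof \<delta> = \<sigma>}"
    and S_stat: "stationary S"
    and mus_regular: "\<forall>i. is_card (mus i) \<and> cof (mus i) = mus i"
    and mus_incr: "strict_mono mus"
    and mus_below: "\<forall>i. mus i < \<mu>"
    and mus_cofinal: "\<forall>\<beta><\<mu>. \<exists>i. \<beta> < mus i"
    and sigma_mus: "\<sigma> < mus 0"
    and c0_mono: "\<forall>\<delta>\<in>S. strict_mono_on {..<\<sigma>} (c0 \<delta>)"
    and c0_club: "\<forall>\<delta>\<in>S. club_in \<delta> (c0 \<delta> ` {..<\<sigma>})"
    and c0_guess: "\<forall>D. club D \<longrightarrow> stationary {\<delta>\<in>S. c0 \<delta> ` {..<\<sigma>} \<subseteq> D}"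
    and C_club: "\<forall>\<delta>\<in>S. club_in \<delta> (C \<delta>)"
    and C_c0: "\<forall>\<delta>\<in>S. c0 \<delta> ` {..<\<sigma>} \<subseteq> C \<delta>"
    and C_size: "\<forall>\<delta>\<in>S. \<forall>\<epsilon><\<sigma>. \<forall>m.
                  card_le (C \<delta> \<inter> Ival c0 \<delta> \<epsilon> m) {..<csucc (mus m)}"
    and C_cof: "\<forall>\<delta>\<in>S. \<forall>\<epsilon><\<sigma>. \<forall>m. \<forall>\<alpha>\<in>nacc \<delta> (C \<delta>) \<inter> Ival c0 \<delta> \<epsilon> m.
                  csucc (mus m) < cof \<alpha>"
    and C_guess: "\<forall>D. club D \<longrightarrow> stationary {\<delta>\<in>S. \<forall>\<epsilon><\<sigma>. \<forall>m.
                  D \<inter> nacc \<delta> (C \<delta>) \<inter> Ival c0 \<delta> \<epsilon> m \<noteq> {}}"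
    and E_club: "club E"
  shows "stationary {\<delta>\<in>S. E \<inter> C \<delta> \<notin> ideal_I \<mu> \<delta> (C \<delta>)}"
proof -
  have infmus: "infinite (range mus)" proof
    assume "finite (range mus)"
    hence "finite (UNIV :: nat set)" using finite_imageD strict_mono_imp_inj_on[OF mus_incr] by blast
    thus False by simp
  qed
  have "range mus \<subseteq> {..<\<mu>}" using mus_below by auto
  hence "infinite {..<\<mu>}" using infmus finite_subset by blast
  hence iom: "infinite {..<(omega::'a)}" unfolding omega_def by (rule LeastI)
  have sc: "is_card \<sigma>" and scf: "cof \<sigma> = \<sigma>" using sigma_regular by auto
  have isig: "infinite {..<\<sigma>}"
  proof
    assume "finite {..<\<sigma>}"
    moreover have "{..<omega} \<subseteq> {..<\<sigma>}" using sigma_unc by auto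
    ultimately show False using iom finite_subset by blast
  qed
  have T: "stationary {\<delta>\<in>S. \<forall>\<epsilon><\<sigma>. \<forall>m. E \<inter> nacc \<delta> (C \<delta>) \<inter> Ival c0 \<delta> \<epsilon> m \<noteq> {}}"
    using C_guess E_club by blast
  show ?thesis unfolding stationary_def
  proof (intro allI impI)
    fix D :: "'a set" assume "club D"
    then obtain \<delta> where d: "\<delta> \<in> S" "\<delta> \<in> D"
      and g: "\<forall>\<epsilon><\<sigma>. \<forall>m. E \<inter> nacc \<delta> (C \<delta>) \<inter> Ival c0 \<delta> \<epsilon> m \<noteq> {}"
      using T unfolding stationary_def by blast
    have "E \<inter> C \<delta> \<notin> ideal_I \<mu> \<delta> (C \<delta>)"
    proof
      assume "E \<inter> C \<delta> \<in> ideal_I \<mu> \<delta> (C \<delta>)"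
      then obtain F where F: "finite F" "F \<subseteq> {(\<alpha>, \<beta>). \<alpha> < \<mu> \<and> \<beta> < \<delta>}"
        and cov: "E \<inter> C \<delta> \<subseteq> (\<Union>(\<alpha>, \<beta>)\<in>F. gen_set \<delta> (C \<delta>) \<alpha> \<beta>)"
        unfolding ideal_I_def by blast
      have cl0: "club_in \<delta> (c0 \<delta> ` {..<\<sigma>})" using c0_club d(1) by blast
      have b0: "c0 \<delta> omega < \<delta>" using cl0 sigma_unc unfolding club_in_def by blast
      define a where "a = Max (insert (mus 0) (fst ` F))"
      define b where "b = Max (insert (c0 \<delta> omega) (snd ` F))"
      have a_lt: "a < \<mu>" unfolding a_def using F mus_below by (subst Max_less_iff) auto
      have b_lt: "b < \<delta>" unfolding b_def using F b0 by (subst Max_less_iff) auto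
      have a_ge: "p \<in> F \<Longrightarrow> fst p \<le> a" for p unfolding a_def using F(1) by (intro Max_ge) auto
      have b_ge: "p \<in> F \<Longrightarrow> snd p \<le> b" for p unfolding b_def using F(1) by (intro Max_ge) auto
      obtain m where am: "a < mus m" using mus_cofinal a_lt by blast
      obtain \<xi> where \<xi>: "\<xi> < \<sigma>" "b \<le> c0 \<delta> \<xi>" using cl0 b_lt unfolding club_in_def by blast
      obtain \<alpha> where al: "lim_or_zero \<alpha>" "\<xi> \<le> \<alpha>" "\<alpha> < \<sigma>"
        using lim_above[OF sc scf iom sigma_unc \<xi>(1)] by blast
      obtain \<epsilon> where ep: "\<epsilon> \<le> \<alpha>" "om_times \<epsilon> = \<alpha>" using om_times_lim[OF al(1)] by blast
      have eps: "\<epsilon> < \<sigma>" using ep(1) al(3) by (rule le_less_trans)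
      have op: "om_plus \<epsilon> m < \<sigma>" "\<alpha> \<le> om_plus \<epsilon> m"
        unfolding om_plus_def ep(2) using iter_below[OF sc isig al(3)] by auto
      have xo: "\<xi> \<le> om_plus \<epsilon> m" using al(2) op(2) by (rule order_trans)
      have cmono: "c0 \<delta> \<xi> \<le> c0 \<delta> (om_plus \<epsilon> m)"
      proof (cases "\<xi> = om_plus \<epsilon> m")
        case False
        hence "\<xi> < om_plus \<epsilon> m" using xo by simp
        moreover have "strict_mono_on {..<\<sigma>} (c0 \<delta>)" using c0_mono d(1) by blast
        ultimately show ?thesis using \<xi>(1) op(1) strict_mono_onD[of "{..<\<sigma>}" "c0 \<delta>"] by fastforce
      qed simp
      obtain \<gamma> where ga: "\<gamma> \<in> E" "\<gamma> \<in> nacc \<delta> (C \<delta>)" "\<gamma> \<in> Ival c0 \<delta> \<epsilon> m"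
        using g eps by blast
      have gC: "\<gamma> \<in> C \<delta>" "\<gamma> \<notin> acc \<delta> (C \<delta>)" using ga(2) unfolding nacc_def by auto
      then obtain p where p: "p \<in> F" "\<gamma> \<in> gen_set \<delta> (C \<delta>) (fst p) (snd p)"
        using cov ga(1) by fastforce
      have cofg: "csucc (mus m) < cof \<gamma>" using C_cof d(1) eps ga(2,3) by blast
      have "card_lt {..<mus m} {..<\<mu>}" using mu_card mus_below unfolding is_card_def by blast
      hence ms: "mus m \<le> csucc (mus m)" by (rule csucc_ge)
      have gi: "c0 \<delta> (om_plus \<epsilon> m) < \<gamma>" using ga(3) unfolding Ival_def by blast
      from p(2) gC(2) have "cof \<gamma> < fst p \<or> \<gamma> < snd p" unfolding gen_set_def by blast
      thus False
      proof
        assume h: "cof \<gamma> < fst p"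
        have "fst p < mus m" using a_ge[OF p(1)] am by (rule le_less_trans)
        hence "fst p < csucc (mus m)" using ms by (rule less_le_trans)
        hence "fst p < cof \<gamma>" using cofg by (rule less_trans)
        thus False using h by (meson less_asym)
      next
        assume h: "\<gamma> < snd p"
        have "snd p \<le> c0 \<delta> \<xi>" using b_ge[OF p(1)] \<xi>(2) by (rule order_trans)
        hence "snd p \<le> c0 \<delta> (om_plus \<epsilon> m)" using cmono by (rule order_trans)
        hence "snd p < \<gamma>" using gi by (rule le_less_trans)
        thus False using h by (meson less_asym)
      qed
    qed
    thus "{\<delta> \<in> S. E \<inter> C \<delta> \<notin> ideal_I \<mu> \<delta> (C \<delta>)} \<inter> D \<noteq> {}" using d by blast
  qed
qed

end
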